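(* Let $k$ be a field of characteristic zero, let $q\in k\setminus\{0\}$, and let $f=a/b\in k(x,y)$ with $a,b\in k[x,y]$, $b\neq 0$. Let $d\in k[y]$ be an irreducible polynomial which divides $b$. Then: (i) $\operatorname{res}_{D_y}(\sigma_x(f),d)=\sigma_x(\operatorname{res}_{D_y}(f,d))$; (ii) $\operatorname{res}_{D_y}(\tau_{x,q}(f),d)=\tau_{x,q}(\operatorname{res}_{D_y}(f,d))$; (iii) $\operatorname{res}_{\sigma_y}(\tau_{x,q}(f),d,j)=\tau_{x,q}(\operatorname{res}_{\sigma_y}(f,d,j))$ for all $j\in\mathbb{N}$.
   Context: On $k(x,y)$ define the automorphisms $\sigma_x(f(x,y))=f(x+1,y)$, $\sigma_y(f(x,y))=f(x,y+1)$ and $\tau_{x,q}(f(x,y))=f(qx,y)$. Regard $k(x,y)=K(y)$ with $K=k(x)$. $D_y$-residue: every $f\in K(y)$ can be written uniquely as $f=p+\sum_{i=1}^n\sum_{j=1}^{m_i} a_{i,j}/d_i^j$ with $p,a_{i,j}\in K[y]$, $\deg_y(a_{i,j})<\deg_y(d_i)$, and the $d_i$ distinct monic irreducible polynomials in $K[y]$ (irreducible partial fraction decomposition); $\operatorname{res}_{D_y}(f,d_i):=a_{i,1}$ (and the residue at an irreducible $d$ not among the $d_i$ is $0$). $\sigma_y$-residue: two polynomials $p,p'$ are $\sigma_y$-equivalent if $p=\sigma_y^i(p')$ for some $i\in\mathbb{Z}$. Writing the irreducible partial fraction decomposition of $f$ with respect to $y$ over $K$ and grouping the terms whose denominators are powers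 of elements of the $\sigma_y$-orbit of the irreducible $d$, one gets uniquely $f=\sum_{j}\sum_{\ell} a_{j,\ell}/\sigma_y^{\ell}(d)^j+R$, where $a_{j,\ell}\in K[y]$, $\deg_y(a_{j,\ell})<\deg_y(d)$, and $R$ has no irreducible factor $\sigma_y$-equivalent to $d$ in its denominator. Then $\operatorname{res}_{\sigma_y}(f,d,j):=\sum_{\ell}\sigma_y^{-\ell}(a_{j,\ell})$, the $\sigma_y$-residue of $f$ at $d$ of multiplicity $j$. *)

theory Defs
  imports "HOL-Computational_Algebra.Polynomial" "HOL-Computational_Algebra.Fraction_Field"
begin

text \<open>Model: k[x] = 'k poly, K = k(x) = 'k poly fract, K[y] = K poly,
  K(y) = k(x,y) = K poly fract.  k[x,y] = 'k poly poly (polynomials in y with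
  coefficients in k[x]).\<close>

definition fract_lift :: "('a::idom \<Rightarrow> 'b::idom) \<Rightarrow> 'a fract \<Rightarrow> 'b fract" where
  "fract_lift h r = (THE s. \<forall>a b. b \<noteq> 0 \<longrightarrow> r = Fract a b \<longrightarrow> s = Fract (h a) (h b))"

definition shiftx_poly :: "'k::field \<Rightarrow> 'k poly \<Rightarrow> 'k poly" where
  "shiftx_poly c p = pcompose p [:c, 1:]"
definition qdil_poly :: "'k::field \<Rightarrow> 'k poly \<Rightarrow> 'k poly" where
  "qdil_poly q p = pcompose p [:0, q:]"

definition sigma_x_K :: "'k::field poly fract \<Rightarrow> 'k poly fract" where
  "sigma_x_K = fract_lift (shiftx_poly 1)"
definition sigma_x_Ky :: "'k::field poly fract poly \<Rightarrow> 'k poly fract poly" where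
  "sigma_x_Ky = map_poly sigma_x_K"
definition sigma_x :: "'k::field poly fract poly fract \<Rightarrow> 'k poly fract poly fract" where
  "sigma_x = fract_lift sigma_x_Ky"

definition tau_x_K :: "'k::field \<Rightarrow> 'k poly fract \<Rightarrow> 'k poly fract" where
  "tau_x_K q = fract_lift (qdil_poly q)"
definition tau_x_Ky :: "'k::field \<Rightarrow> 'k poly fract poly \<Rightarrow> 'k poly fract poly" where
  "tau_x_Ky q = map_poly (tau_x_K q)"
definition tau_x :: "'k::field \<Rightarrow> 'k poly fract poly fract \<Rightarrow> 'k poly fract poly fract" where
  "tau_x q = fract_lift (tau_x_Ky q)"

definition sigma_y_pow :: "int \<Rightarrow> 'K::field poly \<Rightarrow> 'K poly" where
  "sigma_y_pow l p = pcompose p [:of_int l, 1:]"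

definition monic_of :: "'K::field poly \<Rightarrow> 'K poly" where
  "monic_of d = smult (inverse (lead_coeff d)) d"

definition is_pfd :: "'K::field poly fract \<Rightarrow> 'K poly \<Rightarrow> ('K poly \<Rightarrow> nat \<Rightarrow> 'K poly) \<Rightarrow> bool" where
  "is_pfd f p A \<longleftrightarrow>
     finite {(d, j). A d j \<noteq> 0} \<and>
     (\<forall>d j. A d j \<noteq> 0 \<longrightarrow> lead_coeff d = 1 \<and> irreducible d \<and> j \<ge> 1 \<and> degree (A d j) < degree d) \<and>
     f = Fract p 1 + (\<Sum>(d, j)\<in>{(d, j). A d j \<noteq> 0}. Fract (A d j) (d ^ j))"

definition pfd_coeffs :: "'K::field poly fract \<Rightarrow> 'K poly \<Rightarrow> nat \<Rightarrow> 'K poly" where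
  "pfd_coeffs f = (THE A. \<exists>p. is_pfd f p A)"

definition res_D :: "'K::field poly fract \<Rightarrow> 'K poly \<Rightarrow> 'K poly" where
  "res_D f d = pfd_coeffs f (monic_of d) 1"

definition res_sigma :: "'K::field poly fract \<Rightarrow> 'K poly \<Rightarrow> nat \<Rightarrow> 'K poly" where
  "res_sigma f d j =
     (\<Sum>l\<in>{l::int. pfd_coeffs f (sigma_y_pow l (monic_of d)) j \<noteq> 0}.
        sigma_y_pow (- l) (pfd_coeffs f (sigma_y_pow l (monic_of d)) j))"

definition emb_kxy :: "'k::field poly poly \<Rightarrow> 'k poly fract poly" where
  "emb_kxy a = map_poly (\<lambda>c. Fract c 1) a"
definition emb_ky :: "'k::field poly \<Rightarrow> 'k poly poly" where
  "emb_ky d = map_poly (\<lambda>c. [:c:]) d"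

end

theory Submission
  imports Defs "HOL-Computational_Algebra.Polynomial"
begin

definition rhom :: "('a::comm_ring_1 \<Rightarrow> 'b::comm_ring_1) \<Rightarrow> bool" where
  "rhom h \<longleftrightarrow> (\<forall>x y. h (x + y) = h x + h y) \<and> (\<forall>x y. h (x * y) = h x * h y) \<and> h 1 = 1"

lemma rhom_add: "rhom h \<Longrightarrow> h (x + y) = h x + h y" by (simp add: rhom_def)
lemma rhom_mult: "rhom h \<Longrightarrow> h (x * y) = h x * h y" by (simp add: rhom_def)
lemma rhom_1: "rhom h \<Longrightarrow> h 1 = 1" by (simp add: rhom_def)
lemma rhom_0: "rhom h \<Longrightarrow> h 0 = 0"
  using rhom_add[of h 0 0] by simp
lemma rhom_uminus: "rhom h \<Longrightarrow> h (- x) = - h x"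
  using rhom_add[of h x "-x"] rhom_0[of h] by (simp add: add_eq_0_iff)
lemma rhom_diff: "rhom h \<Longrightarrow> h (x - y) = h x - h y"
  using rhom_add[of h x "-y"] rhom_uminus[of h y] by simp
lemma rhom_sum: "rhom h \<Longrightarrow> h (sum f A) = (\<Sum>x\<in>A. h (f x))"
  by (induction A rule: infinite_finite_induct) (auto simp: rhom_0 rhom_add)
lemma rhom_power: "rhom h \<Longrightarrow> h (x ^ n) = h x ^ n"
  by (induction n) (auto simp: rhom_1 rhom_mult)
lemma rhom_of_nat: "rhom h \<Longrightarrow> h (of_nat n) = of_nat n"
  by (induction n) (auto simp: rhom_0 rhom_1 rhom_add)
lemma rhom_of_int: "rhom h \<Longrightarrow> h (of_int n) = of_int n"
  by (cases n rule: int_cases) (auto simp: rhom_of_nat rhom_uminus simp del: of_nat_Suc)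
lemma rhom_inverse:
  fixes h :: "'a::field \<Rightarrow> 'b::field"
  assumes "rhom h" shows "h (inverse x) = inverse (h x)"
proof (cases "x = 0")
  case True then show ?thesis by (simp add: rhom_0 assms)
next
  case False
  have "h x * h (inverse x) = 1" using rhom_mult[OF assms, of x "inverse x"] False rhom_1[OF assms] by simp
  then show ?thesis by (metis inverse_unique)
qed

definition ihom :: "('a::comm_ring_1 \<Rightarrow> 'a) \<Rightarrow> ('a \<Rightarrow> 'a) \<Rightarrow> bool" where
  "ihom h g \<longleftrightarrow> rhom h \<and> rhom g \<and> (\<forall>x. g (h x) = x) \<and> (\<forall>x. h (g x) = x)"

lemma ihom_sym: "ihom h g \<Longrightarrow> ihom g h" by (auto simp: ihom_def)
lemma ihom_gh: "ihom h g \<Longrightarrow> g (h x) = x" by (auto simp: ihom_def)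
lemma ihom_hg: "ihom h g \<Longrightarrow> h (g x) = x" by (auto simp: ihom_def)
lemma ihom_rhom: "ihom h g \<Longrightarrow> rhom h" by (auto simp: ihom_def)
lemma ihom_inj: "ihom h g \<Longrightarrow> inj h" by (metis ihom_gh injI)
lemma ihom_eq0: "ihom h g \<Longrightarrow> h x = 0 \<longleftrightarrow> x = 0"
  by (metis ihom_def ihom_gh rhom_0)

lemma coeff_map_poly_rhom: "rhom h \<Longrightarrow> coeff (map_poly h p) n = h (coeff p n)"
  by (simp add: coeff_map_poly rhom_0)

lemma rhom_map_poly: assumes "rhom h" shows "rhom (map_poly h)"
proof -
  have "map_poly h (p + q) = map_poly h p + map_poly h q" for p q
    by (rule poly_eqI) (simp add: coeff_map_poly_rhom assms rhom_add)
  moreover have "map_poly h (p * q) = map_poly h p * map_poly h q" for p q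
    by (rule poly_eqI) (simp add: coeff_map_poly_rhom assms rhom_sum rhom_mult coeff_mult)
  moreover have "map_poly h 1 = 1" using assms by (simp add: rhom_1)
  ultimately show ?thesis by (simp add: rhom_def)
qed

lemma ihom_map_poly: assumes "ihom h g" shows "ihom (map_poly h) (map_poly g)"
proof -
  have "map_poly g (map_poly h p) = p" for p
    by (rule poly_eqI) (metis assms coeff_map_poly_rhom ihom_def)
  moreover have "map_poly h (map_poly g p) = p" for p
    by (rule poly_eqI) (metis assms coeff_map_poly_rhom ihom_def)
  ultimately show ?thesis using assms by (auto simp: ihom_def rhom_map_poly)
qed

lemma fract_lift_Fract:
  fixes h :: "'a::idom \<Rightarrow> 'b::idom"
  assumes h: "rhom h" "inj h" and b: "b \<noteq> 0"
  shows "fract_lift h (Fract a b) = Fract (h a) (h b)"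
  unfolding fract_lift_def
proof (rule the_equality)
  have hnz: "h y \<noteq> 0" if "y \<noteq> 0" for y using h that by (metis injD rhom_0)
  show "\<forall>a' b'. b' \<noteq> 0 \<longrightarrow> Fract a b = Fract a' b' \<longrightarrow> Fract (h a) (h b) = Fract (h a') (h b')"
  proof (intro allI impI)
    fix a' b' :: 'a assume b': "b' \<noteq> 0" and e: "Fract a b = Fract a' b'"
    then have "a * b' = a' * b" using b by (simp add: eq_fract)
    then have "h a * h b' = h a' * h b" by (metis h(1) rhom_mult)
    then show "Fract (h a) (h b) = Fract (h a') (h b')" using hnz b b' by (simp add: eq_fract)
  qed
next
  fix s assume "\<forall>a' b'. b' \<noteq> 0 \<longrightarrow> Fract a b = Fract a' b' \<longrightarrow> s = Fract (h a') (h b')"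
  then show "s = Fract (h a) (h b)" using b by blast
qed

lemma rhom_fract_lift:
  fixes h :: "'a::idom \<Rightarrow> 'b::idom"
  assumes h: "rhom h" "inj h"
  shows "rhom (fract_lift h)"
proof -
  have hnz: "h y \<noteq> 0" if "y \<noteq> 0" for y using h that by (metis injD rhom_0)
  have "fract_lift h (x + y) = fract_lift h x + fract_lift h y" for x y
    by (cases x; cases y) (simp add: fract_lift_Fract h hnz rhom_add rhom_mult)
  moreover have "fract_lift h (x * y) = fract_lift h x * fract_lift h y" for x y
    by (cases x; cases y) (simp add: fract_lift_Fract h hnz rhom_mult)
  moreover have "fract_lift h 1 = 1"
    by (simp add: One_fract_def fract_lift_Fract h rhom_1)
  ultimately show ?thesis by (simp add: rhom_def)
qed

lemma ihom_fract_lift: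
  fixes h :: "'a::idom \<Rightarrow> 'a"
  assumes "ihom h g" shows "ihom (fract_lift h) (fract_lift g)"
proof -
  have r: "rhom h" "inj h" "rhom g" "inj g"
    using assms ihom_sym ihom_inj ihom_rhom by blast+
  have nz: "h y \<noteq> 0" if "y \<noteq> 0" for y using assms that ihom_eq0 by blast
  have "fract_lift g (fract_lift h x) = x" for x
    by (cases x) (simp add: fract_lift_Fract r nz ihom_gh[OF assms])
  moreover have "fract_lift h (fract_lift g x) = x" for x
    using ihom_sym[OF assms] ihom_eq0[OF ihom_sym[OF assms]]
    by (cases x) (simp add: fract_lift_Fract r ihom_hg[OF assms])
  ultimately show ?thesis using r by (simp add: ihom_def rhom_fract_lift)
qed


lemma Fract_0_any: "Fract 0 b = 0"
  by (metis Zero_fract_def eq_fract(3))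

lemma fract_add_same: "Fract (a::'a::idom) D + Fract b D = Fract (a + b) D"
proof (cases "D = 0")
  case True then show ?thesis by (simp add: eq_fract(2) Zero_fract_def[symmetric])
next
  case False
  have "Fract a D + Fract b D = Fract (a * D + b * D) (D * D)" by (rule add_fract[OF False False])
  also have "\<dots> = Fract (a + b) D"
    using False by (subst eq_fract(1)) (simp_all add: algebra_simps)
  finally show ?thesis .
qed

lemma fract_diff_same: "Fract (a::'a::idom) D - Fract b D = Fract (a - b) D"
proof -
  have "Fract a D - Fract b D = Fract a D + Fract (- b) D" by (simp add: minus_fract[symmetric] del: minus_fract)
  also have "\<dots> = Fract (a - b) D" by (simp add: fract_add_same del: minus_fract add_fract)
  finally show ?thesis .
qed

lemma fract_sum_same: "(\<Sum>i\<in>I. Fract (x i) (D::'a::idom)) = Fract (\<Sum>i\<in>I. x i) D"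
  by (induction I rule: infinite_finite_induct) (auto simp: Fract_0_any fract_add_same)

lemma irr_deg_pos: "irreducible (d::'a::field poly) \<Longrightarrow> degree d > 0"
proof -
  assume "irreducible d"
  then have "d \<noteq> 0" "\<not> is_unit d" by (simp_all add: irreducible_def)
  then show ?thesis using is_unit_iff_degree[of d] by simp
qed

definition spt :: "('a::zero poly \<Rightarrow> nat \<Rightarrow> 'a poly) \<Rightarrow> ('a poly \<times> nat) set" where
  "spt A = {(d, j). A d j \<noteq> 0}"

definition Ssum :: "('a::field poly \<Rightarrow> nat \<Rightarrow> 'a poly) \<Rightarrow> 'a poly fract" where
  "Ssum A = (\<Sum>(d, j)\<in>spt A. Fract (A d j) (d ^ j))"

definition pfd_ok :: "('a::field poly \<Rightarrow> nat \<Rightarrow> 'a poly) \<Rightarrow> bool" where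
  "pfd_ok A \<longleftrightarrow> finite (spt A) \<and>
     (\<forall>d j. A d j \<noteq> 0 \<longrightarrow> lead_coeff d = 1 \<and> irreducible d \<and> j \<ge> 1 \<and> degree (A d j) < degree d)"

lemma is_pfd_iff: "is_pfd f p A \<longleftrightarrow> pfd_ok A \<and> f = Fract p 1 + Ssum A"
  by (simp add: is_pfd_def pfd_ok_def Ssum_def spt_def)

lemma Ssum_superset:
  assumes "finite U" "spt A \<subseteq> U"
  shows "Ssum A = (\<Sum>(d, j)\<in>U. Fract (A d j) (d ^ j))"
  unfolding Ssum_def
  by (rule sum.mono_neutral_left) (use assms in \<open>auto simp: spt_def Fract_0_any\<close>)

lemma Ssum_add:
  assumes "pfd_ok A" "pfd_ok B"
  shows "Ssum (\<lambda>d j. A d j + B d j) = Ssum A + Ssum B"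
proof -
  let ?U = "spt A \<union> spt B"
  have fin: "finite ?U" using assms by (simp add: pfd_ok_def)
  have "Ssum (\<lambda>d j. A d j + B d j) = (\<Sum>(d, j)\<in>?U. Fract (A d j + B d j) (d ^ j))"
    by (rule Ssum_superset[OF fin]) (auto simp: spt_def)
  also have "\<dots> = (\<Sum>(d, j)\<in>?U. Fract (A d j) (d ^ j)) + (\<Sum>(d, j)\<in>?U. Fract (B d j) (d ^ j))"
    by (simp add: sum.distrib[symmetric] fract_add_same split_def)
  also have "\<dots> = Ssum A + Ssum B"
    by (simp add: Ssum_superset[OF fin])
  finally show ?thesis .
qed

lemma Ssum_diff:
  assumes "pfd_ok A" "pfd_ok B"
  shows "Ssum (\<lambda>d j. A d j - B d j) = Ssum A - Ssum B"
proof -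
  let ?U = "spt A \<union> spt B"
  have fin: "finite ?U" using assms by (simp add: pfd_ok_def)
  have "Ssum (\<lambda>d j. A d j - B d j) = (\<Sum>(d, j)\<in>?U. Fract (A d j - B d j) (d ^ j))"
    by (rule Ssum_superset[OF fin]) (auto simp: spt_def)
  also have "\<dots> = (\<Sum>(d, j)\<in>?U. Fract (A d j) (d ^ j)) - (\<Sum>(d, j)\<in>?U. Fract (B d j) (d ^ j))"
    by (simp add: sum_subtractf[symmetric] fract_diff_same split_def)
  also have "\<dots> = Ssum A - Ssum B"
    by (simp add: Ssum_superset[OF fin])
  finally show ?thesis .
qed

lemma pfd_ok_add:
  assumes "pfd_ok A" "pfd_ok B" shows "pfd_ok (\<lambda>d j. A d j + B d j)"
proof -
  have "spt (\<lambda>d j. A d j + B d j) \<subseteq> spt A \<union> spt B" by (auto simp: spt_def)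
  moreover have "finite (spt A \<union> spt B)" using assms by (simp add: pfd_ok_def)
  ultimately have "finite (spt (\<lambda>d j. A d j + B d j))" by (rule finite_subset)
  moreover have "lead_coeff d = 1 \<and> irreducible d \<and> j \<ge> 1 \<and> degree (A d j + B d j) < degree d"
    if "A d j + B d j \<noteq> 0" for d j
  proof -
    have "A d j \<noteq> 0 \<or> B d j \<noteq> 0" using that by auto
    then have *: "lead_coeff d = 1 \<and> irreducible d \<and> j \<ge> 1" using assms by (auto simp: pfd_ok_def)
    have "degree (A d j) < degree d" using assms * by (cases "A d j = 0") (auto simp: pfd_ok_def irr_deg_pos)
    moreover have "degree (B d j) < degree d" using assms * by (cases "B d j = 0") (auto simp: pfd_ok_def irr_deg_pos)
    ultimately show ?thesis using * by (simp add: degree_add_less)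
  qed
  ultimately show ?thesis by (simp add: pfd_ok_def)
qed

lemma pfd_ok_diff:
  assumes "pfd_ok A" "pfd_ok B" shows "pfd_ok (\<lambda>d j. A d j - B d j)"
proof -
  have "spt (\<lambda>d j. A d j - B d j) \<subseteq> spt A \<union> spt B" by (auto simp: spt_def)
  moreover have "finite (spt A \<union> spt B)" using assms by (simp add: pfd_ok_def)
  ultimately have "finite (spt (\<lambda>d j. A d j - B d j))" by (rule finite_subset)
  moreover have "lead_coeff d = 1 \<and> irreducible d \<and> j \<ge> 1 \<and> degree (A d j - B d j) < degree d"
    if "A d j - B d j \<noteq> 0" for d j
  proof -
    have "A d j \<noteq> 0 \<or> B d j \<noteq> 0" using that by auto
    then have *: "lead_coeff d = 1 \<and> irreducible d \<and> j \<ge> 1" using assms by (auto simp: pfd_ok_def)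
    have "degree (A d j) < degree d" using assms * by (cases "A d j = 0") (auto simp: pfd_ok_def irr_deg_pos)
    moreover have "degree (B d j) < degree d" using assms * by (cases "B d j = 0") (auto simp: pfd_ok_def irr_deg_pos)
    ultimately show ?thesis using * by (simp add: degree_diff_less)
  qed
  ultimately show ?thesis by (simp add: pfd_ok_def)
qed


lemma irr_bezout:
  fixes d a :: "'a::field poly"
  assumes irr: "irreducible d" and nd: "\<not> d dvd a"
  shows "\<exists>u v. u * d + v * a = 1"
proof -
  define I where "I = {g. (\<exists>u v. g = u * d + v * a) \<and> g \<noteq> 0}"
  have "d \<in> I" using irr unfolding I_def irreducible_def by (auto intro: exI[of _ 1] exI[of _ 0])
  then have ex: "\<exists>n. \<exists>g\<in>I. degree g = n" by blast
  define n where "n = (LEAST n. \<exists>g\<in>I. degree g = n)"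
  obtain g where gI: "g \<in> I" and gn: "degree g = n" using LeastI_ex[OF ex] unfolding n_def by blast
  have minI: "degree g \<le> degree h" if "h \<in> I" for h
  proof -
    have "n \<le> degree h" unfolding n_def by (rule Least_le) (use that in blast)
    then show ?thesis using gn by simp
  qed
  obtain u v where g: "g = u * d + v * a" and g0: "g \<noteq> 0" using gI unfolding I_def by blast
  have dvdI: "g dvd x" if x: "x = u' * d + v' * a" for x u' v'
  proof (rule ccontr)
    assume "\<not> g dvd x"
    then have r0: "x mod g \<noteq> 0" by (simp add: dvd_eq_mod_eq_0)
    have "x mod g = x - (x div g) * g" by (simp add: minus_div_mult_eq_mod)
    also have "\<dots> = (u' - (x div g) * u) * d + (v' - (x div g) * v) * a"
      by (simp add: x g algebra_simps)
    finally have "x mod g \<in> I" using r0 unfolding I_def by blast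
    then have "degree g \<le> degree (x mod g)" by (rule minI)
    moreover have "degree (x mod g) < degree g" using degree_mod_less[OF g0, of x] r0 by simp
    ultimately show False by simp
  qed
  have gd: "g dvd d" by (rule dvdI[of d 1 0]) simp
  have ga: "g dvd a" by (rule dvdI[of a 0 1]) simp
  obtain c where dc: "d = g * c" using gd by (auto elim: dvdE)
  have "is_unit g \<or> is_unit c" using irreducibleD[OF irr dc] .
  moreover have "\<not> is_unit c"
  proof
    assume "is_unit c"
    then have "d dvd g" using dc by (simp add: mult_unit_dvd_iff)
    then show False using ga nd dvd_trans by blast
  qed
  ultimately have "is_unit g" by blast
  then obtain w where "1 = g * w" by (auto elim: dvdE)
  then have "(w * u) * d + (w * v) * a = 1" by (simp add: g algebra_simps)
  then show ?thesis by blast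
qed

lemma irr_prime:
  fixes d a b :: "'a::field poly"
  assumes irr: "irreducible d" and dab: "d dvd a * b"
  shows "d dvd a \<or> d dvd b"
proof (cases "d dvd a")
  case False
  obtain u v where uv: "u * d + v * a = 1" using irr_bezout[OF irr False] by blast
  have "b = (u * d + v * a) * b" using uv by simp
  also have "\<dots> = (u * b) * d + v * (a * b)" by (simp add: algebra_simps)
  finally have "b = (u * b) * d + v * (a * b)" .
  moreover have "d dvd (u * b) * d + v * (a * b)" using dab by simp
  ultimately show ?thesis by simp
qed simp

lemma irr_prime_power:
  fixes d e :: "'a::field poly"
  assumes irr: "irreducible d" and "d dvd e ^ n"
  shows "d dvd e"
  using assms(2)
proof (induction n)
  case 0 then show ?case using irr by (simp add: irreducible_def)
next
  case (Suc n)
  then show ?case using irr_prime[OF irr, of e "e ^ n"] by auto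
qed

lemma irr_prime_prod:
  fixes d :: "'a::field poly"
  assumes irr: "irreducible d" and fin: "finite A" and "d dvd prod f A"
  shows "\<exists>x\<in>A. d dvd f x"
  using fin assms(3)
proof (induction A rule: finite_induct)
  case empty then show ?case using irr by (simp add: irreducible_def)
next
  case (insert x F)
  then show ?case using irr_prime[OF irr, of "f x" "prod f F"] by auto
qed

lemma monic_dvd_irr_eq:
  fixes d e :: "'a::field poly"
  assumes "lead_coeff d = 1" "lead_coeff e = 1" "irreducible e" "\<not> is_unit d" "d dvd e"
  shows "d = e"
proof -
  obtain c where ec: "e = d * c" using assms(5) by (auto elim: dvdE)
  have "is_unit c" using irreducibleD[OF assms(3) ec] assms(4) by blast
  moreover have "e \<noteq> 0" using assms(2) by auto
  ultimately have "lead_coeff c = 1" using ec assms(1,2) by (simp add: lead_coeff_mult)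
  with \<open>is_unit c\<close> have "c = 1" using is_unit_monom_trivial[of c] by (simp add: monom_0 one_pCons)
  then show ?thesis using ec by simp
qed


lemma Ssum_common:
  fixes C :: "'a::field poly \<Rightarrow> nat \<Rightarrow> 'a poly"
  assumes fin: "finite Sp" and Q0: "Q \<noteq> 0" and dv: "\<And>e j. (e, j) \<in> Sp \<Longrightarrow> e ^ j dvd Q"
  shows "(\<Sum>(e, j)\<in>Sp. Fract (C e j) (e ^ j)) = Fract (\<Sum>(e, j)\<in>Sp. C e j * (Q div e ^ j)) Q"
proof -
  have "(\<Sum>(e, j)\<in>Sp. Fract (C e j) (e ^ j)) = (\<Sum>x\<in>Sp. Fract ((\<lambda>(e, j). C e j * (Q div e ^ j)) x) Q)"
  proof (rule sum.cong[OF refl])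
    fix x assume x: "x \<in> Sp"
    obtain e j where xe: "x = (e, j)" by (cases x)
    have d: "e ^ j dvd Q" using dv x xe by simp
    then have n0: "e ^ j \<noteq> 0" using Q0 by auto
    have "Fract (C e j) (e ^ j) = Fract (C e j * (Q div e ^ j)) Q"
      using n0 Q0 d by (subst eq_fract(1)) (simp_all add: mult.assoc)
    then show "(case x of (e, j) \<Rightarrow> Fract (C e j) (e ^ j)) = Fract ((\<lambda>(e, j). C e j * (Q div e ^ j)) x) Q"
      using xe by simp
  qed
  also have "\<dots> = Fract (\<Sum>(e, j)\<in>Sp. C e j * (Q div e ^ j)) Q" by (rule fract_sum_same)
  finally show ?thesis .
qed

lemma pfd_unique_zero:
  fixes C :: "'a::field poly \<Rightarrow> nat \<Rightarrow> 'a poly"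
  assumes ok: "pfd_ok C" and eq: "Ssum C = Fract r 1"
  shows "C d0 j0 = 0"
proof (rule ccontr)
  assume nz0: "C d0 j0 \<noteq> 0"
  define Sp where "Sp = spt C"
  have finS: "finite Sp" using ok by (simp add: pfd_ok_def Sp_def)
  have pp: "lead_coeff e = 1 \<and> irreducible e \<and> j \<ge> 1 \<and> degree (C e j) < degree e" if "C e j \<noteq> 0" for e j
    using ok that by (simp add: pfd_ok_def)
  define J where "J e = {j. C e j \<noteq> 0}" for e
  have finJ: "finite (J e)" for e
  proof -
    have "J e \<subseteq> snd ` Sp" by (force simp: J_def Sp_def spt_def)
    then show ?thesis using finS finite_surj by blast
  qed
  define Me where "Me e = Max (J e)" for e
  have leM: "j \<le> Me e" if "C e j \<noteq> 0" for e j
    unfolding Me_def by (rule Max_ge[OF finJ]) (simp add: J_def that)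
  define m where "m = Me d0"
  have Cm: "C d0 m \<noteq> 0"
  proof -
    have "J d0 \<noteq> {}" using nz0 by (auto simp: J_def)
    then have "m \<in> J d0" unfolding m_def Me_def by (rule Max_in[OF finJ])
    then show ?thesis by (simp add: J_def)
  qed
  note pd0 = pp[OF Cm]
  have m1: "m \<ge> 1" using pd0 by simp
  have d0nu: "\<not> is_unit d0" using pd0 by (simp add: irreducible_def)
  define Ds where "Ds = fst ` Sp"
  have finD: "finite Ds" using finS by (simp add: Ds_def)
  have Dsp: "lead_coeff e = 1 \<and> irreducible e" if "e \<in> Ds" for e
  proof -
    obtain j where "(e, j) \<in> Sp" using \<open>e \<in> Ds\<close> by (auto simp: Ds_def)
    then have "C e j \<noteq> 0" by (simp add: Sp_def spt_def)
    then show ?thesis using pp by blast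
  qed
  define P where "P = (\<Prod>e\<in>Ds - {d0}. e ^ Me e)"
  define Q where "Q = d0 ^ m * P"
  have P0: "P \<noteq> 0"
  proof -
    have "e ^ Me e \<noteq> 0" if "e \<in> Ds - {d0}" for e
    proof -
      have "lead_coeff e = 1" using Dsp that by blast
      then have "e \<noteq> 0" by auto
      then show ?thesis by simp
    qed
    moreover have fD: "finite (Ds - {d0})" using finD by simp
    ultimately show ?thesis unfolding P_def using prod_zero_iff[OF fD, of "\<lambda>e. e ^ Me e"] by blast
  qed
  have d00: "d0 \<noteq> 0" using pd0 by auto
  have Q0: "Q \<noteq> 0" using P0 d00 by (simp add: Q_def)
  have dvQ: "e ^ j dvd Q" if "(e, j) \<in> Sp" for e j
  proof -
    have Cej: "C e j \<noteq> 0" using that by (simp add: Sp_def spt_def)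
    show ?thesis
    proof (cases "e = d0")
      case True
      then have "j \<le> m" using leM[OF Cej] by (simp add: m_def)
      then have "d0 ^ j dvd d0 ^ m" by (rule le_imp_power_dvd)
      then show ?thesis using True by (simp add: Q_def)
    next
      case False
      have eD: "e \<in> Ds - {d0}" using that False by (force simp: Ds_def)
      have "e ^ j dvd e ^ Me e" using leM[OF Cej] by (rule le_imp_power_dvd)
      also have "\<dots> dvd P" unfolding P_def by (rule dvd_prodI[OF _ eD]) (simp add: finD)
      finally show ?thesis by (simp add: Q_def)
    qed
  qed
  define N where "N = (\<Sum>(e, j)\<in>Sp. C e j * (Q div e ^ j))"
  have "Ssum C = Fract N Q" unfolding Ssum_def N_def Sp_def[symmetric]
    by (rule Ssum_common[OF finS Q0 dvQ])
  then have "Fract N Q = Fract r 1" using eq by simp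
  then have "N = r * Q" using Q0 by (simp add: eq_fract(1))
  then have dN: "d0 dvd N" using m1 by (simp add: Q_def)
  have mS: "(d0, m) \<in> Sp" using Cm by (simp add: Sp_def spt_def)
  have N_split: "N = C d0 m * P + (\<Sum>(e, j)\<in>Sp - {(d0, m)}. C e j * (Q div e ^ j))"
  proof -
    have "N = C d0 m * (Q div d0 ^ m) + (\<Sum>(e, j)\<in>Sp - {(d0, m)}. C e j * (Q div e ^ j))"
      unfolding N_def by (subst sum.remove[OF finS mS]) simp
    moreover have "Q div d0 ^ m = P" using d00 by (simp add: Q_def)
    ultimately show ?thesis by simp
  qed
  have rest: "d0 dvd (\<Sum>(e, j)\<in>Sp - {(d0, m)}. C e j * (Q div e ^ j))"
  proof (rule dvd_sum)
    fix x assume x: "x \<in> Sp - {(d0, m)}"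
    obtain e j where xe: "x = (e, j)" by (cases x)
    have ejS: "(e, j) \<in> Sp" and ne: "(e, j) \<noteq> (d0, m)" using x xe by auto
    have Cej: "C e j \<noteq> 0" using ejS by (simp add: Sp_def spt_def)
    have "d0 dvd Q div e ^ j"
    proof (cases "e = d0")
      case True
      then have jm: "j < m" using ne leM[OF Cej] by (simp add: m_def le_less)
      have "Q = d0 ^ j * (d0 ^ (m - j) * P)" using jm
        by (simp add: Q_def mult.assoc[symmetric] power_add[symmetric])
      then have "Q div d0 ^ j = d0 ^ (m - j) * P" using d00 by simp
      moreover have "d0 dvd d0 ^ (m - j)" using jm by (simp add: dvd_power)
      ultimately show ?thesis using True by simp
    next
      case False
      have eD: "e \<in> Ds" using ejS by (force simp: Ds_def)
      have "Q = (Q div e ^ j) * e ^ j" using dvQ[OF ejS] by simp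
      moreover have "d0 dvd Q" using m1 by (simp add: Q_def)
      ultimately have "d0 dvd (Q div e ^ j) * e ^ j" by simp
      then have "d0 dvd Q div e ^ j \<or> d0 dvd e ^ j" using irr_prime pd0 by blast
      moreover have "\<not> d0 dvd e ^ j"
      proof
        assume "d0 dvd e ^ j"
        then have "d0 dvd e" using irr_prime_power pd0 by blast
        then have "d0 = e" using monic_dvd_irr_eq[of d0 e] pd0 Dsp[OF eD] d0nu by blast
        then show False using False by simp
      qed
      ultimately show ?thesis by blast
    qed
    then show "d0 dvd (case x of (e, j) \<Rightarrow> C e j * (Q div e ^ j))" using xe by simp
  qed
  have "d0 dvd C d0 m * P" using dN rest unfolding N_split by (simp add: dvd_add_left_iff)
  moreover have "\<not> d0 dvd P"
  proof
    assume "d0 dvd P"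
    then obtain e where eD: "e \<in> Ds - {d0}" and "d0 dvd e ^ Me e"
      using irr_prime_prod[of d0 "Ds - {d0}"] pd0 finD unfolding P_def by blast
    then have "d0 dvd e" using irr_prime_power pd0 by blast
    then have "d0 = e" using monic_dvd_irr_eq[of d0 e] pd0 Dsp eD d0nu by blast
    then show False using eD by simp
  qed
  ultimately have "d0 dvd C d0 m" using irr_prime pd0 by blast
  then have "degree d0 \<le> degree (C d0 m)" using Cm by (rule dvd_imp_degree_le)
  then show False using pd0 by simp
qed


lemma pfd_unique:
  fixes f :: "'a::field poly fract"
  assumes "is_pfd f p A" "is_pfd f q B"
  shows "A = B"
proof -
  have okA: "pfd_ok A" and fA: "f = Fract p 1 + Ssum A" using assms(1) by (simp_all add: is_pfd_iff)
  have okB: "pfd_ok B" and fB: "f = Fract q 1 + Ssum B" using assms(2) by (simp_all add: is_pfd_iff)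
  have ok: "pfd_ok (\<lambda>d j. A d j - B d j)" by (rule pfd_ok_diff[OF okA okB])
  have "Ssum (\<lambda>d j. A d j - B d j) = Ssum A - Ssum B" by (rule Ssum_diff[OF okA okB])
  also have "\<dots> = Fract (q - p) 1"
  proof -
    have sA: "Ssum A = f - Fract p 1" using fA by simp
    have sB: "Ssum B = f - Fract q 1" using fB by simp
    have "Fract (q - p) 1 = Fract q 1 - Fract p 1" by (rule fract_diff_same[symmetric])
    then show ?thesis unfolding sA sB by (simp del: diff_fract add: algebra_simps)
  qed
  finally have "Ssum (\<lambda>d j. A d j - B d j) = Fract (q - p) 1" .
  then have "A d j - B d j = 0" for d j using pfd_unique_zero[OF ok] by blast
  then show ?thesis by (auto simp: fun_eq_iff)
qed

definition has_pfd :: "'a::field poly fract \<Rightarrow> bool" where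
  "has_pfd f \<longleftrightarrow> (\<exists>p A. is_pfd f p A)"

lemma pfd_poly: "is_pfd (Fract p 1) p (\<lambda>_ _. 0)"
  by (simp add: is_pfd_iff pfd_ok_def spt_def Ssum_def)

lemma pfd_add:
  assumes "is_pfd f p A" "is_pfd g q B"
  shows "is_pfd (f + g) (p + q) (\<lambda>d j. A d j + B d j)"
proof -
  have okA: "pfd_ok A" and fA: "f = Fract p 1 + Ssum A" using assms(1) by (simp_all add: is_pfd_iff)
  have okB: "pfd_ok B" and fB: "g = Fract q 1 + Ssum B" using assms(2) by (simp_all add: is_pfd_iff)
  have "f + g = (Fract p 1 + Fract q 1) + (Ssum A + Ssum B)" using fA fB by (simp add: algebra_simps)
  also have "\<dots> = Fract (p + q) 1 + Ssum (\<lambda>d j. A d j + B d j)"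
    by (simp add: fract_add_same Ssum_add[OF okA okB] del: add_fract)
  finally show ?thesis using pfd_ok_add[OF okA okB] by (simp add: is_pfd_iff)
qed

lemma has_pfd_add: "has_pfd f \<Longrightarrow> has_pfd g \<Longrightarrow> has_pfd (f + g)"
  unfolding has_pfd_def using pfd_add by blast

lemma pfd_single:
  fixes d c :: "'a::field poly"
  assumes "lead_coeff d = 1" "irreducible d" "j \<ge> 1" "c \<noteq> 0 \<Longrightarrow> degree c < degree d"
  shows "has_pfd (Fract c (d ^ j))"
proof (cases "c = 0")
  case True
  then show ?thesis using pfd_poly[of 0] unfolding has_pfd_def by (auto simp: Fract_0_any)
next
  case False
  define A where "A = (\<lambda>e i. if e = d \<and> i = j then c else 0)"
  have spt: "spt A = {(d, j)}" using False by (auto simp: spt_def A_def)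
  have "pfd_ok A" unfolding pfd_ok_def spt using assms False by (auto simp: A_def)
  moreover have "Ssum A = Fract c (d ^ j)" unfolding Ssum_def spt by (simp add: A_def)
  ultimately have "is_pfd (Fract c (d ^ j)) 0 A" by (simp add: is_pfd_iff Fract_0_any)
  then show ?thesis unfolding has_pfd_def by blast
qed

lemma pfd_dpow:
  fixes d :: "'a::field poly"
  assumes d: "lead_coeff d = 1" "irreducible d"
  shows "has_pfd (Fract w (d ^ k))"
proof (induction k arbitrary: w)
  case 0
  then show ?case using pfd_poly[of w] unfolding has_pfd_def by auto
next
  case (Suc k)
  have d0: "d \<noteq> 0" using d by auto
  have "Fract w (d ^ Suc k) = Fract (w mod d) (d ^ Suc k) + Fract ((w div d) * d) (d ^ Suc k)"
    by (simp add: fract_add_same del: add_fract)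
  also have "Fract ((w div d) * d) (d ^ Suc k) = Fract (w div d) (d ^ k)"
    using d0 by (subst eq_fract(1)) (simp_all add: algebra_simps)
  finally have eq: "Fract w (d ^ Suc k) = Fract (w mod d) (d ^ Suc k) + Fract (w div d) (d ^ k)" .
  have "has_pfd (Fract (w mod d) (d ^ Suc k))"
    by (rule pfd_single[OF d]) (use degree_mod_less[OF d0, of w] in auto)
  then show ?case unfolding eq using Suc.IH has_pfd_add by blast
qed

lemma monic_irr_factor:
  fixes m :: "'a::field poly"
  shows "degree m > 0 \<Longrightarrow> \<exists>d. lead_coeff d = 1 \<and> irreducible d \<and> d dvd m"
proof (induction "degree m" arbitrary: m rule: less_induct)
  case less
  have m0: "m \<noteq> 0" using less.prems by auto
  have nu: "\<not> is_unit m" using less.prems is_unit_iff_degree[OF m0] by simp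
  show ?case
  proof (cases "irreducible m")
    case True
    define d where "d = smult (inverse (lead_coeff m)) m"
    have l0: "lead_coeff m \<noteq> 0" using m0 by simp
    have dm: "d = [:inverse (lead_coeff m):] * m" by (simp add: d_def)
    have "is_unit [:inverse (lead_coeff m):]" by (rule is_unit_triv) (simp add: l0 m0)
    then have "irreducible d" using True dm irreducible_mult_unit_left by blast
    moreover have "lead_coeff d = 1" using l0 by (simp add: d_def)
    moreover have "d dvd m"
    proof -
      have "m = [:lead_coeff m:] * d" using l0 by (simp add: d_def)
      then show ?thesis by (metis dvd_triv_right)
    qed
    ultimately show ?thesis by blast
  next
    case False
    then obtain a b where mab: "m = a * b" and na: "\<not> is_unit a" and nb: "\<not> is_unit b"
      using m0 nu unfolding irreducible_def by blast
    have a0: "a \<noteq> 0" and b0: "b \<noteq> 0" using m0 mab by auto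
    have da: "degree a > 0" using a0 na is_unit_iff_degree by auto
    have db: "degree b > 0" using b0 nb is_unit_iff_degree by auto
    have "degree m = degree a + degree b" using mab a0 b0 by (simp add: degree_mult_eq)
    then have "degree a < degree m" using db by simp
    then obtain d where "lead_coeff d = 1 \<and> irreducible d \<and> d dvd a" using less.hyps da by blast
    then show ?thesis using mab by (auto intro: dvd_mult2)
  qed
qed

lemma split_power:
  fixes d m :: "'a::field poly"
  assumes irr: "irreducible d" and m0: "m \<noteq> 0"
  shows "\<exists>k m'. m = d ^ k * m' \<and> \<not> d dvd m' \<and> (d dvd m \<longrightarrow> k \<ge> 1)"
  using m0
proof (induction "degree m" arbitrary: m rule: less_induct)
  case less
  show ?case
  proof (cases "d dvd m")
    case False
    then show ?thesis by (intro exI[of _ 0] exI[of _ m]) simp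
  next
    case True
    then obtain m1 where mm: "m = d * m1" by (auto elim: dvdE)
    have m10: "m1 \<noteq> 0" using less.prems mm by auto
    have d0: "d \<noteq> 0" using irr by (simp add: irreducible_def)
    have "degree m = degree d + degree m1" using mm d0 m10 by (simp add: degree_mult_eq)
    then have "degree m1 < degree m" using irr_deg_pos[OF irr] by simp
    then obtain k m' where "m1 = d ^ k * m'" "\<not> d dvd m'" using less.hyps m10 by blast
    then show ?thesis using mm by (intro exI[of _ "Suc k"] exI[of _ m']) (simp add: mult.assoc)
  qed
qed

lemma bezout_power:
  fixes d m :: "'a::field poly"
  assumes irr: "irreducible d" and nd: "\<not> d dvd m"
  shows "\<exists>u v. u * d ^ k + v * m = 1"
proof (induction k)
  case 0
  then show ?case by (intro exI[of _ 1] exI[of _ 0]) simp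
next
  case (Suc k)
  then obtain u v where uv: "u * d ^ k + v * m = 1" by blast
  obtain u1 v1 where uv1: "u1 * d + v1 * m = 1" using irr_bezout[OF irr nd] by blast
  have "(u * d ^ k + v * m) * (u1 * d + v1 * m) = 1" using uv uv1 by simp
  then have "(u * u1) * d ^ Suc k + (u * d ^ k * v1 + v * u1 * d + v * v1 * m) * m = 1"
    by (simp add: algebra_simps)
  then show ?case by blast
qed

lemma pfd_exists_Fract:
  fixes m :: "'a::field poly"
  shows "m \<noteq> 0 \<Longrightarrow> has_pfd (Fract n m)"
proof (induction "degree m" arbitrary: m n rule: less_induct)
  case less
  show ?case
  proof (cases "degree m = 0")
    case True
    define c where "c = coeff m 0"
    have mc: "m = [:c:]" using True by (intro poly_eqI) (auto simp: c_def coeff_eq_0 coeff_pCons split: nat.splits)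
    have c0: "c \<noteq> 0" using less.prems mc by simp
    have "Fract n m = Fract (smult (inverse c) n) 1"
      using less.prems c0 by (subst eq_fract(1)) (simp_all add: mc)
    then show ?thesis using pfd_poly unfolding has_pfd_def by metis
  next
    case False
    then obtain d where d: "lead_coeff d = 1" "irreducible d" "d dvd m"
      using monic_irr_factor by blast
    obtain k m' where km: "m = d ^ k * m'" "\<not> d dvd m'" "k \<ge> 1"
      using split_power[OF d(2) less.prems] d(3) by blast
    have d0: "d \<noteq> 0" using d by auto
    have m'0: "m' \<noteq> 0" using km less.prems by auto
    have "degree m = k * degree d + degree m'" using km d0 m'0
      by (simp add: degree_mult_eq degree_power_eq)
    moreover have "k * degree d > 0" using km irr_deg_pos[OF d(2)] by simp
    ultimately have lt: "degree m' < degree m" by simp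
    obtain u v where uv: "u * d ^ k + v * m' = 1" using bezout_power[OF d(2) km(2)] by blast
    have "Fract (n * u) m' + Fract (n * v) (d ^ k) = Fract (n * u * d ^ k + n * v * m') (m' * d ^ k)"
      using m'0 d0 by simp
    also have "\<dots> = Fract n m"
    proof -
      have "n * u * d ^ k + n * v * m' = n * (u * d ^ k + v * m')" by (simp add: algebra_simps)
      then have "n * u * d ^ k + n * v * m' = n" using uv by simp
      then show ?thesis using km by (simp add: mult.commute)
    qed
    finally have eq: "Fract n m = Fract (n * u) m' + Fract (n * v) (d ^ k)" by simp
    have "has_pfd (Fract (n * u) m')" using less.hyps lt m'0 by blast
    moreover have "has_pfd (Fract (n * v) (d ^ k))" by (rule pfd_dpow[OF d(1,2)])
    ultimately show ?thesis unfolding eq by (rule has_pfd_add)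
  qed
qed

lemma pfd_exists: "has_pfd (f :: 'a::field poly fract)"
  by (cases f) (simp add: pfd_exists_Fract)

lemma pfd_coeffs_eq: "is_pfd f p A \<Longrightarrow> pfd_coeffs f = A"
  unfolding pfd_coeffs_def by (rule the_equality) (auto intro: pfd_unique)

lemma pfd_obtain: obtains p where "is_pfd f p (pfd_coeffs f)"
  using pfd_exists[of f] pfd_coeffs_eq unfolding has_pfd_def by metis


lemma ihom_unit: "ihom h g \<Longrightarrow> is_unit y \<Longrightarrow> is_unit (h y)"
  by (metis dvdE dvdI ihom_rhom rhom_1 rhom_mult)

lemma ihom_irreducible:
  assumes ih: "ihom (h :: 'a::{comm_ring_1,algebraic_semidom} \<Rightarrow> 'a) g" and irr: "irreducible x"
  shows "irreducible (h x)"
proof -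
  have ig: "ihom g h" by (rule ihom_sym[OF ih])
  have "h x \<noteq> 0" using irr ihom_eq0[OF ih] by (auto simp: irreducible_def)
  moreover have "\<not> is_unit (h x)"
  proof
    assume "is_unit (h x)"
    then have "is_unit (g (h x))" by (rule ihom_unit[OF ig])
    then show False using irr ihom_gh[OF ih] by (simp add: irreducible_def)
  qed
  moreover have "is_unit a \<or> is_unit b" if hab: "h x = a * b" for a b
  proof -
    have "x = g a * g b" using hab ihom_gh[OF ih, of x] ihom_rhom[OF ig] rhom_mult by metis
    then have "is_unit (g a) \<or> is_unit (g b)" using irreducibleD[OF irr] by blast
    then show ?thesis using ihom_unit[OF ih] ihom_hg[OF ih] by metis
  qed
  ultimately show ?thesis by (auto simp: irreducible_def)
qed

lemma pfd_transfer:
  fixes \<phi> \<psi> :: "'a::field \<Rightarrow> 'a"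
  assumes ih: "ihom \<phi> \<psi>" and pf: "is_pfd f p A"
  shows "is_pfd (fract_lift (map_poly \<phi>) f) (map_poly \<phi> p) (\<lambda>e j. map_poly \<phi> (A (map_poly \<psi> e) j))"
proof -
  define P where "P = map_poly \<phi>"
  define S where "S = map_poly \<psi>"
  have iP: "ihom P S" unfolding P_def S_def by (rule ihom_map_poly[OF ih])
  have rP: "rhom P" and injP: "inj P" using iP ihom_rhom ihom_inj by blast+
  have rH: "rhom (fract_lift P)" by (rule rhom_fract_lift[OF rP injP])
  have okA: "pfd_ok A" and fA: "f = Fract p 1 + Ssum A" using pf by (simp_all add: is_pfd_iff)
  define A' where "A' = (\<lambda>e j. P (A (S e) j))"
  have P0: "P x = 0 \<longleftrightarrow> x = 0" for x by (rule ihom_eq0[OF iP])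
  have degP: "degree (P x) = degree x" for x
    unfolding P_def by (rule degree_map_poly) (use ihom_eq0[OF ih] in blast)
  have leadP: "lead_coeff (P x) = \<phi> (lead_coeff x)" for x
  proof -
    have "coeff (P x) (degree x) = \<phi> (coeff x (degree x))"
      unfolding P_def by (rule coeff_map_poly) (simp add: rhom_0 ihom_rhom[OF ih])
    then show ?thesis using degP by simp
  qed
  define g where "g = (\<lambda>(d :: 'a poly, j :: nat). (P d, j))"
  have injg: "inj_on g X" for X unfolding g_def inj_on_def using injP by (auto dest: injD)
  have spt': "spt A' = g ` spt A"
  proof
    show "spt A' \<subseteq> g ` spt A"
    proof
      fix x assume "x \<in> spt A'"
      then obtain e j where x: "x = (e, j)" and "A (S e) j \<noteq> 0" by (auto simp: spt_def A'_def P0)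
      then have "(S e, j) \<in> spt A" by (simp add: spt_def)
      moreover have "x = g (S e, j)" using x ihom_hg[OF iP] by (simp add: g_def)
      ultimately show "x \<in> g ` spt A" by blast
    qed
  next
    show "g ` spt A \<subseteq> spt A'"
      using ihom_gh[OF iP] by (auto simp: g_def spt_def A'_def P0)
  qed
  have okA': "pfd_ok A'"
  proof -
    have "finite (spt A')" using okA by (simp add: spt' pfd_ok_def)
    moreover have "lead_coeff e = 1 \<and> irreducible e \<and> j \<ge> 1 \<and> degree (A' e j) < degree e"
      if "A' e j \<noteq> 0" for e j
    proof -
      have nz: "A (S e) j \<noteq> 0" using that by (simp add: A'_def P0)
      then have pr: "lead_coeff (S e) = 1" "irreducible (S e)" "j \<ge> 1" "degree (A (S e) j) < degree (S e)"
        using okA by (auto simp: pfd_ok_def)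
      have eP: "e = P (S e)" using ihom_hg[OF iP] by simp
      have "lead_coeff e = 1" using pr(1) eP leadP rhom_1[OF ihom_rhom[OF ih]] by metis
      moreover have "irreducible e" using ihom_irreducible[OF iP pr(2)] eP by simp
      moreover have "degree (A' e j) < degree e" using pr(4) eP degP by (metis A'_def)
      ultimately show ?thesis using pr(3) by simp
    qed
    ultimately show ?thesis by (simp add: pfd_ok_def)
  qed
  have "fract_lift P f = fract_lift P (Fract p 1) + fract_lift P (Ssum A)"
    using fA rhom_add[OF rH] by simp
  also have "fract_lift P (Fract p 1) = Fract (P p) 1"
    using fract_lift_Fract[OF rP injP] rhom_1[OF rP] by simp
  also have "fract_lift P (Ssum A) = Ssum A'"
  proof -
    have "fract_lift P (Ssum A) = (\<Sum>x\<in>spt A. fract_lift P (case x of (d, j) \<Rightarrow> Fract (A d j) (d ^ j)))"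
      unfolding Ssum_def by (rule rhom_sum[OF rH])
    also have "\<dots> = (\<Sum>x\<in>spt A. (case g x of (e, j) \<Rightarrow> Fract (A' e j) (e ^ j)))"
    proof (rule sum.cong[OF refl])
      fix x assume x: "x \<in> spt A"
      obtain d j where xd: "x = (d, j)" by (cases x)
      have "A d j \<noteq> 0" using x xd by (simp add: spt_def)
      then have "lead_coeff d = 1" using okA by (simp add: pfd_ok_def)
      then have "d ^ j \<noteq> 0" by auto
      then have "fract_lift P (Fract (A d j) (d ^ j)) = Fract (P (A d j)) (P d ^ j)"
        using fract_lift_Fract[OF rP injP] rhom_power[OF rP] by simp
      then show "fract_lift P (case x of (d, j) \<Rightarrow> Fract (A d j) (d ^ j)) =
          (case g x of (e, j) \<Rightarrow> Fract (A' e j) (e ^ j))"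
        using xd ihom_gh[OF iP] by (simp add: g_def A'_def)
    qed
    also have "\<dots> = (\<Sum>y\<in>g ` spt A. (case y of (e, j) \<Rightarrow> Fract (A' e j) (e ^ j)))"
      by (rule sum.reindex[OF injg, symmetric, unfolded comp_def])
    also have "\<dots> = Ssum A'" unfolding Ssum_def spt' ..
    finally show ?thesis .
  qed
  finally have "fract_lift P f = Fract (P p) 1 + Ssum A'" .
  then show ?thesis using okA' unfolding is_pfd_iff A'_def P_def S_def by simp
qed

lemma coeffs_transfer:
  fixes \<phi> \<psi> :: "'a::field \<Rightarrow> 'a"
  assumes ih: "ihom \<phi> \<psi>"
  shows "pfd_coeffs (fract_lift (map_poly \<phi>) f) e j = map_poly \<phi> (pfd_coeffs f (map_poly \<psi> e) j)"
proof -
  obtain p where "is_pfd f p (pfd_coeffs f)" by (rule pfd_obtain)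
  from pfd_transfer[OF ih this] pfd_coeffs_eq show ?thesis by metis
qed


lemma rhom_pcompose: "rhom (\<lambda>p. pcompose p (r :: 'a::comm_ring_1 poly))"
  by (simp add: rhom_def pcompose_add pcompose_mult pcompose_1)

lemma ihom_shiftx: "ihom (shiftx_poly (c::'k::field)) (shiftx_poly (- c))"
proof -
  have a: "pcompose [:c, 1:] [:- c, 1:] = [:0, 1:]" by (simp add: pcompose_pCons)
  have b: "pcompose [:- c, 1:] [:c, 1:] = [:0, 1:]" by (simp add: pcompose_pCons)
  show ?thesis unfolding ihom_def shiftx_poly_def
    using rhom_pcompose[of "[:c, 1:]"] rhom_pcompose[of "[:-c, 1:]"] by (simp add: pcompose_assoc[symmetric] a b)
qed

lemma ihom_qdil: assumes "(q::'k::field) \<noteq> 0" shows "ihom (qdil_poly q) (qdil_poly (inverse q))"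
proof -
  have a: "pcompose [:0, q:] [:0, inverse q:] = [:0, 1:]" using assms by (simp add: pcompose_pCons)
  have b: "pcompose [:0, inverse q:] [:0, q:] = [:0, 1:]" using assms by (simp add: pcompose_pCons)
  show ?thesis unfolding ihom_def qdil_poly_def
    using rhom_pcompose[of "[:0, q:]"] rhom_pcompose[of "[:0, inverse q:]"] by (simp add: pcompose_assoc[symmetric] a b)
qed

lemma fix_const:
  assumes ih: "ihom h g" and hc: "\<And>c. h [:c:] = [:c:]"
  shows "fract_lift h (Fract [:c:] 1) = Fract [:c:] (1 :: 'k::field poly)"
  using fract_lift_Fract[OF ihom_rhom[OF ih] ihom_inj[OF ih]] rhom_1[OF ihom_rhom[OF ih]] by (simp add: hc)

lemma map_poly_fix_D:
  fixes \<phi> :: "'k::field poly fract \<Rightarrow> 'k poly fract"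
  assumes r: "rhom \<phi>" and fx: "\<And>c. \<phi> (Fract [:c:] 1) = Fract [:c:] 1"
  shows "map_poly \<phi> (emb_kxy (emb_ky d)) = emb_kxy (emb_ky d)"
proof (rule poly_eqI)
  fix n
  have z: "(\<lambda>c. Fract c (1::'k poly poly)) 0 = 0" by (simp add: Fract_0_any)
  show "coeff (map_poly \<phi> (emb_kxy (emb_ky d))) n = coeff (emb_kxy (emb_ky d)) n"
    unfolding emb_kxy_def emb_ky_def
    by (simp add: coeff_map_poly rhom_0[OF r] Fract_0_any fx)
qed

lemma map_poly_monic_of:
  fixes \<phi> :: "'a::field \<Rightarrow> 'a"
  assumes ih: "ihom \<phi> \<psi>"
  shows "map_poly \<phi> (monic_of X) = monic_of (map_poly \<phi> X)"
proof -
  have r: "rhom \<phi>" by (rule ihom_rhom[OF ih])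
  have degP: "degree (map_poly \<phi> x) = degree x" for x
    by (rule degree_map_poly) (use ihom_eq0[OF ih] in blast)
  have lead: "lead_coeff (map_poly \<phi> X) = \<phi> (lead_coeff X)"
    using degP[of X] by (simp add: coeff_map_poly rhom_0[OF r])
  show ?thesis unfolding monic_of_def
    by (rule poly_eqI) (simp add: coeff_map_poly rhom_0[OF r] lead rhom_mult[OF r] rhom_inverse[OF r])
qed

lemma map_poly_pcompose:
  fixes \<phi> :: "'a::comm_ring_1 \<Rightarrow> 'a"
  assumes r: "rhom \<phi>"
  shows "map_poly \<phi> (pcompose p s) = pcompose (map_poly \<phi> p) (map_poly \<phi> s)"
proof (induction p rule: pCons_induct)
  case 0 then show ?case by simp
next
  case (pCons a p)
  have rP: "rhom (map_poly \<phi>)" by (rule rhom_map_poly[OF r])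
  have c: "map_poly \<phi> [:a:] = [:\<phi> a:]" by (simp add: map_poly_pCons rhom_0[OF r])
  show ?case
    by (simp add: pcompose_pCons rhom_add[OF rP] rhom_mult[OF rP] c pCons.IH map_poly_pCons rhom_0[OF r])
qed

lemma map_poly_sigma_y:
  fixes \<phi> :: "'a::field \<Rightarrow> 'a"
  assumes r: "rhom \<phi>"
  shows "map_poly \<phi> (sigma_y_pow l X) = sigma_y_pow l (map_poly \<phi> X)"
proof -
  have "map_poly \<phi> [:of_int l, 1:] = [:of_int l, 1:]"
    by (simp add: map_poly_pCons rhom_0[OF r] rhom_of_int[OF r] rhom_1[OF r])
  then show ?thesis unfolding sigma_y_pow_def by (simp add: map_poly_pcompose[OF r])
qed

lemma res_transfer:
  fixes \<phi> :: "'k::field poly fract \<Rightarrow> 'k poly fract" and d :: "'k poly"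
  assumes ih: "ihom \<phi> \<psi>" and fx: "\<And>c. \<phi> (Fract [:c:] 1) = Fract [:c:] 1"
  defines "D \<equiv> emb_kxy (emb_ky d)"
  shows "res_D (fract_lift (map_poly \<phi>) f) D = map_poly \<phi> (res_D f D)"
    and "res_sigma (fract_lift (map_poly \<phi>) f) D j = map_poly \<phi> (res_sigma f D j)"
proof -
  have r: "rhom \<phi>" by (rule ihom_rhom[OF ih])
  have iP: "ihom (map_poly \<phi>) (map_poly \<psi>)" by (rule ihom_map_poly[OF ih])
  have rP: "rhom (map_poly \<phi>)" by (rule ihom_rhom[OF iP])
  define M where "M = monic_of D"
  have PM: "map_poly \<phi> M = M"
    unfolding M_def D_def map_poly_monic_of[OF ih] map_poly_fix_D[OF r fx] ..
  have PS: "map_poly \<phi> (sigma_y_pow l M) = sigma_y_pow l M" for l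
    by (simp add: map_poly_sigma_y[OF r] PM)
  have SS: "map_poly \<psi> (sigma_y_pow l M) = sigma_y_pow l M" for l
    using ihom_gh[OF iP, of "sigma_y_pow l M"] PS[of l] by simp
  have SM: "map_poly \<psi> M = M" using ihom_gh[OF iP, of M] PM by simp
  show "res_D (fract_lift (map_poly \<phi>) f) D = map_poly \<phi> (res_D f D)"
    unfolding res_D_def M_def[symmetric] coeffs_transfer[OF ih] SM ..
  have cT: "pfd_coeffs (fract_lift (map_poly \<phi>) f) (sigma_y_pow l M) j
      = map_poly \<phi> (pfd_coeffs f (sigma_y_pow l M) j)" for l
    unfolding coeffs_transfer[OF ih] SS ..
  have P0: "map_poly \<phi> x = 0 \<longleftrightarrow> x = 0" for x by (rule ihom_eq0[OF iP])
  have "res_sigma (fract_lift (map_poly \<phi>) f) D j =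
      (\<Sum>l\<in>{l. pfd_coeffs f (sigma_y_pow l M) j \<noteq> 0}.
         map_poly \<phi> (sigma_y_pow (- l) (pfd_coeffs f (sigma_y_pow l M) j)))"
    unfolding res_sigma_def M_def[symmetric] cT P0 map_poly_sigma_y[OF r] ..
  also have "\<dots> = map_poly \<phi> (res_sigma f D j)"
    unfolding res_sigma_def M_def[symmetric] rhom_sum[OF rP] ..
  finally show "res_sigma (fract_lift (map_poly \<phi>) f) D j = map_poly \<phi> (res_sigma f D j)" .
qed

theorem lemma1:
  fixes q :: "'k::field_char_0"
    and a b :: "'k poly poly"
    and d :: "'k poly"
    and f :: "'k poly fract poly fract"
  assumes "q \<noteq> 0"
    and "b \<noteq> 0"
    and "f = Fract (emb_kxy a) (emb_kxy b)"
    and "irreducible d"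
    and "emb_ky d dvd b"
  shows "res_D (sigma_x f) (emb_kxy (emb_ky d)) = sigma_x_Ky (res_D f (emb_kxy (emb_ky d)))
    \<and> res_D (tau_x q f) (emb_kxy (emb_ky d)) = tau_x_Ky q (res_D f (emb_kxy (emb_ky d)))
    \<and> (\<forall>j::nat. res_sigma (tau_x q f) (emb_kxy (emb_ky d)) j
                 = tau_x_Ky q (res_sigma f (emb_kxy (emb_ky d)) j))"
proof -
  have ihs: "ihom (sigma_x_K :: 'k poly fract \<Rightarrow> _) (fract_lift (shiftx_poly (-1)))"
    unfolding sigma_x_K_def by (rule ihom_fract_lift[OF ihom_shiftx])
  have fxs: "sigma_x_K (Fract [:c:] 1) = Fract [:c:] (1 :: 'k poly)" for c
    unfolding sigma_x_K_def by (rule fix_const[OF ihom_shiftx]) (simp add: shiftx_poly_def)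
  have iht: "ihom (tau_x_K q :: 'k poly fract \<Rightarrow> _) (fract_lift (qdil_poly (inverse q)))"
    unfolding tau_x_K_def by (rule ihom_fract_lift[OF ihom_qdil[OF assms(1)]])
  have fxt: "tau_x_K q (Fract [:c:] 1) = Fract [:c:] (1 :: 'k poly)" for c
    unfolding tau_x_K_def by (rule fix_const[OF ihom_qdil[OF assms(1)]]) (simp add: qdil_poly_def)
  have sx: "sigma_x = fract_lift (map_poly sigma_x_K)" by (simp add: sigma_x_def sigma_x_Ky_def fun_eq_iff)
  have tx: "tau_x q = fract_lift (map_poly (tau_x_K q))" by (simp add: tau_x_def tau_x_Ky_def fun_eq_iff)
  show ?thesis
    unfolding sx tx sigma_x_Ky_def tau_x_Ky_def
    using res_transfer[OF ihs fxs] res_transfer[OF iht fxt] by blast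
qed

end
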